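(* Let $m\in\{1,2\}$, $\gamma\in(\gamma_\star,\gamma_1]$ and $z\in(z_1,z_M]$. Then the continuation to the right, $C:[V_8,0)\to(0,\infty)$, of the local real-analytic solution through $P_8$ satisfies $C(V)<\sqrt{-V}$ for all $V\in(V_8,0)$; in particular $C(V)\to0$ as $V\to0^-$.
   Context: Fix $m\in\{1,2\}$. For $z>0$ put $\lambda=1+m\gamma z$, $a_1=1+\frac{m(\gamma-1)}{2}$, $a_2=\frac{m(\gamma-1)+mz\gamma(\gamma-3)}{2}$, $a_3=\frac{mz\gamma(\gamma-1)}{2}$, $G(V,C;\gamma,z)=C^2[(m+1)V+2mz]-V(1+V)(\lambda+V)$, $F(V,C;\gamma,z)=C\{C^2[1+\frac{mz}{1+V}]-a_1(1+V)^2+a_2(1+V)-a_3\}$; ODE $\frac{dC}{dV}=\frac FG$. $z_M=(\sqrt\gamma+\sqrt2)^{-2}$; $w(z)=\sqrt{1-2(\gamma+2)z+(\gamma-2)^2z^2}$, $V_8=\frac{-1+(\gamma-2)z+w}{2}$, $C_8=1+V_8$, $P_8=(V_8,C_8)$. The local solution is the real-analytic solution near $V_8$ with $C(V_8)=C_8$ and $C'(V_8)$ equal to the unique negative root of $-G_Cc^2+(F_C-G_V)c+F_V=0$ (partials at $P_8$); it extends as a positive decreasing solution on $[V_8,0)$. $z_1=\frac{\sqrt5-1}{2(1+\sqrt5+\gamma)}$, $\gamma_1=1+\sqrt2$, and $\gamma_\star\approx1.7$ is the value with $\frac{\sqrt{2\gamma(\gamma-1)}}{\gamma+1}=\sqrt{\frac{2\gamma}{(2+\sqrt{2\gamma})(\gamma+1)}}$.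 *)

theory Defs
  imports "HOL-Analysis.Analysis"
begin

definition lam :: "nat \<Rightarrow> real \<Rightarrow> real \<Rightarrow> real" where
  "lam m \<gamma> z = 1 + real m * \<gamma> * z"
definition a1 :: "nat \<Rightarrow> real \<Rightarrow> real" where
  "a1 m \<gamma> = 1 + real m * (\<gamma> - 1) / 2"
definition a2 :: "nat \<Rightarrow> real \<Rightarrow> real \<Rightarrow> real" where
  "a2 m \<gamma> z = (real m * (\<gamma> - 1) + real m * z * \<gamma> * (\<gamma> - 3)) / 2"
definition a3 :: "nat \<Rightarrow> real \<Rightarrow> real \<Rightarrow> real" where
  "a3 m \<gamma> z = real m * z * \<gamma> * (\<gamma> - 1) / 2"

definition Gf :: "nat \<Rightarrow> real \<Rightarrow> real \<Rightarrow> real \<Rightarrow> real \<Rightarrow> real" where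
  "Gf m \<gamma> z V C = C^2 * ((real m + 1) * V + 2 * real m * z) - V * (1 + V) * (lam m \<gamma> z + V)"
definition Ff :: "nat \<Rightarrow> real \<Rightarrow> real \<Rightarrow> real \<Rightarrow> real \<Rightarrow> real" where
  "Ff m \<gamma> z V C = C * (C^2 * (1 + real m * z / (1 + V)) - a1 m \<gamma> * (1 + V)^2
                      + a2 m \<gamma> z * (1 + V) - a3 m \<gamma> z)"

definition zM :: "real \<Rightarrow> real" where
  "zM \<gamma> = 1 / (sqrt \<gamma> + sqrt 2)^2"
definition wf :: "real \<Rightarrow> real \<Rightarrow> real" where
  "wf \<gamma> z = sqrt (1 - 2 * (\<gamma> + 2) * z + (\<gamma> - 2)^2 * z^2)"
definition V8 :: "real \<Rightarrow> real \<Rightarrow> real" where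
  "V8 \<gamma> z = (-1 + (\<gamma> - 2) * z + wf \<gamma> z) / 2"
definition C8 :: "real \<Rightarrow> real \<Rightarrow> real" where
  "C8 \<gamma> z = 1 + V8 \<gamma> z"

definition z1 :: "real \<Rightarrow> real" where
  "z1 \<gamma> = (sqrt 5 - 1) / (2 * (1 + sqrt 5 + \<gamma>))"
definition gamma1 :: real where
  "gamma1 = 1 + sqrt 2"
definition gamma_star :: real where
  "gamma_star = (THE g. 1 < g \<and>
      sqrt (2 * g * (g - 1)) / (g + 1) = sqrt (2 * g / ((2 + sqrt (2 * g)) * (g + 1))))"

definition slope_eq :: "nat \<Rightarrow> real \<Rightarrow> real \<Rightarrow> real \<Rightarrow> bool" where
  "slope_eq m \<gamma> z c \<longleftrightarrow>
     (let V0 = V8 \<gamma> z; C0 = C8 \<gamma> z;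
          GC = deriv (\<lambda>C. Gf m \<gamma> z V0 C) C0;
          GV = deriv (\<lambda>V. Gf m \<gamma> z V C0) V0;
          FC = deriv (\<lambda>C. Ff m \<gamma> z V0 C) C0;
          FV = deriv (\<lambda>V. Ff m \<gamma> z V C0) V0
      in - GC * c^2 + (FC - GV) * c + FV = 0)"

definition continued_solution :: "nat \<Rightarrow> real \<Rightarrow> real \<Rightarrow> (real \<Rightarrow> real) \<Rightarrow> bool" where
  "continued_solution m \<gamma> z C \<longleftrightarrow>
     (\<exists>r>0. \<exists>a :: nat \<Rightarrow> real. \<forall>V\<in>{V8 \<gamma> z..<V8 \<gamma> z + r}.
         (\<lambda>n. a n * (V - V8 \<gamma> z)^n) sums C V) \<and>
     C (V8 \<gamma> z) = C8 \<gamma> z \<and>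
     (\<exists>c. c < 0 \<and> slope_eq m \<gamma> z c \<and>
          (C has_real_derivative c) (at (V8 \<gamma> z) within {V8 \<gamma> z..<0})) \<and>
     (\<forall>V\<in>{V8 \<gamma> z..<0}. 0 < C V) \<and>
     (\<forall>x y. V8 \<gamma> z \<le> x \<longrightarrow> x \<le> y \<longrightarrow> y < 0 \<longrightarrow> C y \<le> C x) \<and>
     (\<forall>V\<in>{V8 \<gamma> z<..<0}. Gf m \<gamma> z V (C V) \<noteq> 0 \<and>
          (C has_real_derivative Ff m \<gamma> z V (C V) / Gf m \<gamma> z V (C V)) (at V))"

end

theory Submission
  imports Defs
begin


lemma gs_equiv:
  fixes g :: real assumes g: "1 < g"
  shows "(sqrt (2 * g * (g - 1)) / (g + 1) = sqrt (2 * g / ((2 + sqrt (2 * g)) * (g + 1))))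
         \<longleftrightarrow> (g - 1) * (2 + sqrt (2 * g)) = g + 1"
proof -
  define r where "r = sqrt (2*g)"
  have r0: "0 \<le> r" unfolding r_def using g by simp
  have l: "sqrt (2 * g * (g - 1)) / (g + 1) = sqrt (2 * g * (g - 1) / (g+1)^2)"
    using g by (simp add: real_sqrt_divide)
  have "(sqrt (2 * g * (g - 1)) / (g + 1) = sqrt (2 * g / ((2 + r) * (g + 1))))
      \<longleftrightarrow> 2 * g * (g - 1) / (g+1)^2 = 2 * g / ((2 + r) * (g + 1))"
    unfolding l by simp
  also have "\<dots> \<longleftrightarrow> (g - 1) * (2 + r) = g + 1"
  proof -
    have nz: "(g+1)^2 \<noteq> 0" "(2 + r) * (g + 1) \<noteq> 0" using g r0 by auto
    have "2 * g * (g - 1) / (g+1)^2 = 2 * g / ((2 + r) * (g + 1))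
        \<longleftrightarrow> (2 * g * (g - 1)) * ((2 + r) * (g + 1)) = (2 * g) * (g+1)^2"
      using nz by (simp add: frac_eq_eq)
    also have "\<dots> \<longleftrightarrow> (2 * g * (g+1)) * ((g - 1) * (2 + r)) = (2 * g * (g+1)) * (g + 1)"
      by (simp add: power2_eq_square algebra_simps)
    also have "\<dots> \<longleftrightarrow> (g - 1) * (2 + r) = g + 1"
      using g by simp
    finally show ?thesis .
  qed
  finally show ?thesis unfolding r_def .
qed

lemma gamma_star_gt1: "1 < gamma_star"
proof -
  define k where "k g = (g - 1) * (2 + sqrt (2 * g)) - (g + 1)" for g :: real
  have cont: "continuous_on {1..2} k" unfolding k_def by (intro continuous_intros)
  have k1: "k 1 = -2" unfolding k_def by simp
  have k2: "k 2 = 1" unfolding k_def by simp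
  obtain g0 where g0: "1 \<le> g0" "g0 \<le> 2" "k g0 = 0"
    using IVT'[of k 1 0 2] cont k1 k2 by auto
  have g0gt: "1 < g0" using g0 k1 by (cases "g0 = 1") auto
  have mono: "k g1 < k g2" if "1 < g1" "g1 < g2" for g1 g2
  proof -
    have "sqrt (2*g1) \<le> sqrt (2*g2)" using that by simp
    hence "(g1 - 1) * sqrt (2*g1) \<le> (g2 - 1) * sqrt (2*g2)"
      using that by (intro mult_mono) auto
    thus ?thesis unfolding k_def using that by (simp add: algebra_simps)
  qed
  let ?E = "\<lambda>g::real. 1 < g \<and>
      sqrt (2 * g * (g - 1)) / (g + 1) = sqrt (2 * g / ((2 + sqrt (2 * g)) * (g + 1)))"
  have E: "?E g \<longleftrightarrow> 1 < g \<and> k g = 0" for g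
    using gs_equiv[of g] unfolding k_def by auto
  have "\<exists>!g. ?E g"
  proof (rule ex1I[of _ g0])
    show "?E g0" using E g0 g0gt by auto
  next
    fix g assume "?E g"
    hence g: "1 < g" "k g = 0" using E by auto
    show "g = g0"
    proof (rule ccontr)
      assume "g \<noteq> g0"
      hence "g < g0 \<or> g0 < g" by auto
      thus False using mono[of g g0] mono[of g0 g] g g0 g0gt by auto
    qed
  qed
  from theI'[OF this] show ?thesis unfolding gamma_star_def by auto
qed

lemma uni11: fixes s::real assumes "0 \<le> s" "s < 31/50"
  shows "0 < (1)* s^0 + (1)* s^1 + (0)* s^2 + (-4)* s^3 + (1)* s^4 + (1)* s^5"
proof -
  have e: "(1)* s^0 + (1)* s^1 + (0)* s^2 + (-4)* s^3 + (1)* s^4 + (1)* s^5 = (312500000/28629151)* s^0*(31/50-s)^5 + (1756250000/28629151)* s^1*(31/50-s)^4 + (3900000000/28629151)* s^2*(31/50-s)^3 + (3989590000/28629151)* s^3*(31/50-s)^2 + (1787856050/28629151)* s^4*(31/50-s)^1 + (283145201/28629151)* s^5*(31/50-s)^0" by algebra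
  have "0 < (312500000/28629151)* s^0*(31/50-s)^5 + (1756250000/28629151)* s^1*(31/50-s)^4 + (3900000000/28629151)* s^2*(31/50-s)^3 + (3989590000/28629151)* s^3*(31/50-s)^2 + (1787856050/28629151)* s^4*(31/50-s)^1 + (283145201/28629151)* s^5*(31/50-s)^0"
    using assms by (intro add_pos_nonneg add_nonneg_nonneg mult_nonneg_nonneg mult_pos_pos) auto
  then show ?thesis using e by simp
qed

lemma uni1g: fixes s::real assumes "0 \<le> s" "s < 31/50"
  shows "0 < (5/2)* s^0 + (5/2)* s^1 + (-27/4)* s^2 + (-13/4)* s^3 + (25/4)* s^4 + (-5/4)* s^5"
proof -
  have e: "(5/2)* s^0 + (5/2)* s^1 + (-27/4)* s^2 + (-13/4)* s^3 + (25/4)* s^4 + (-5/4)* s^5 = (781250000/28629151)* s^0*(31/50-s)^5 + (4390625000/28629151)* s^1*(31/50-s)^4 + (8939156250/28629151)* s^2*(31/50-s)^3 + (8044166875/28629151)* s^3*(31/50-s)^2 + (6431430625/57258302)* s^4*(31/50-s)^1 + (1862172995/114516604)* s^5*(31/50-s)^0" by algebra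
  have "0 < (781250000/28629151)* s^0*(31/50-s)^5 + (4390625000/28629151)* s^1*(31/50-s)^4 + (8939156250/28629151)* s^2*(31/50-s)^3 + (8044166875/28629151)* s^3*(31/50-s)^2 + (6431430625/57258302)* s^4*(31/50-s)^1 + (1862172995/114516604)* s^5*(31/50-s)^0"
    using assms by (intro add_pos_nonneg add_nonneg_nonneg mult_nonneg_nonneg mult_pos_pos) auto
  then show ?thesis using e by simp
qed

lemma uni21: fixes s::real assumes "0 \<le> s" "s < 31/50"
  shows "0 < (1)* s^0 + (0)* s^1 + (1)* s^2 + (-5)* s^3 + (2)* s^4 + (1)* s^5"
proof -
  have e: "(1)* s^0 + (0)* s^1 + (1)* s^2 + (-5)* s^3 + (2)* s^4 + (1)* s^5 = (312500000/28629151)* s^0*(31/50-s)^5 + (1562500000/28629151)* s^1*(31/50-s)^4 + (3245125000/28629151)* s^2*(31/50-s)^3 + (3112987500/28629151)* s^3*(31/50-s)^2 + (1270452100/28629151)* s^4*(31/50-s)^1 + (181218751/28629151)* s^5*(31/50-s)^0" by algebra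
  have "0 < (312500000/28629151)* s^0*(31/50-s)^5 + (1562500000/28629151)* s^1*(31/50-s)^4 + (3245125000/28629151)* s^2*(31/50-s)^3 + (3112987500/28629151)* s^3*(31/50-s)^2 + (1270452100/28629151)* s^4*(31/50-s)^1 + (181218751/28629151)* s^5*(31/50-s)^0"
    using assms by (intro add_pos_nonneg add_nonneg_nonneg mult_nonneg_nonneg mult_pos_pos) auto
  then show ?thesis using e by simp
qed

lemma uni2g: fixes s::real assumes "0 \<le> s" "s < 31/50"
  shows "0 < (5/2)* s^0 + (3)* s^1 + (-8)* s^2 + (-5)* s^3 + (19/2)* s^4 + (-2)* s^5"
proof -
  have e: "(5/2)* s^0 + (3)* s^1 + (-8)* s^2 + (-5)* s^3 + (19/2)* s^4 + (-2)* s^5 = (781250000/28629151)* s^0*(31/50-s)^5 + (4487500000/28629151)* s^1*(31/50-s)^4 + (9176500000/28629151)* s^2*(31/50-s)^3 + (8044612500/28629151)* s^3*(31/50-s)^2 + (3042147475/28629151)* s^4*(31/50-s)^1 + (410526673/28629151)* s^5*(31/50-s)^0" by algebra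
  have "0 < (781250000/28629151)* s^0*(31/50-s)^5 + (4487500000/28629151)* s^1*(31/50-s)^4 + (9176500000/28629151)* s^2*(31/50-s)^3 + (8044612500/28629151)* s^3*(31/50-s)^2 + (3042147475/28629151)* s^4*(31/50-s)^1 + (410526673/28629151)* s^5*(31/50-s)^0"
    using assms by (intro add_pos_nonneg add_nonneg_nonneg mult_nonneg_nonneg mult_pos_pos) auto
  then show ?thesis using e by simp
qed

definition R1 :: "real \<Rightarrow> real \<Rightarrow> real" where
 "R1 s g = g + s*g + 2* s^2 - s^2*g - s^2*g^2 - 2* s^3 - 3* s^3*g + s^3*g^2 + s^4*g^2 + 2* s^5*g - s^5*g^2"
definition R2 :: "real \<Rightarrow> real \<Rightarrow> real" where
 "R2 s g = g - 2* s + 2* s*g + 2* s^2 + s^2*g - 2* s^2*g^2 - 7* s^3*g + 2* s^3*g^2 + 2* s^4 - 2* s^4*g + 2* s^4*g^2 - 2* s^5 + 5* s^5*g - 2* s^5*g^2"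

lemma R1pos: fixes s g :: real assumes "0 \<le> s" "s < 31/50" "1 \<le> g" "g \<le> 5/2"
  shows "0 < R1 s g"
proof -
  have e: "R1 s g = s^2*(1-s)^2*(1+s)*((g-1)*(5/2-g)) + R1 s 1 * ((5/2-g)*(2/3)) + R1 s (5/2) * ((g-1)*(2/3))"
    unfolding R1_def by (simp add: field_simps power2_eq_square power3_eq_cube power4_eq_xxxx eval_nat_numeral)
  have a: "0 < R1 s 1" using uni11[OF assms(1,2)] unfolding R1_def by (simp add: algebra_simps)
  have b: "0 < R1 s (5/2)" using uni1g[OF assms(1,2)] unfolding R1_def by (simp add: algebra_simps power2_eq_square)
  have c: "0 \<le> s^2*(1-s)^2*(1+s)*((g-1)*(5/2-g))" using assms by simp
  have d: "0 \<le> R1 s 1 * ((5/2-g)*(2/3))" "0 \<le> R1 s (5/2) * ((g-1)*(2/3))" using a b assms by simp_all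
  show ?thesis
  proof (cases "g = 1")
    case True then show ?thesis using a by simp
  next
    case False
    hence "0 < R1 s (5/2) * ((g-1)*(2/3))" using b assms by simp
    then show ?thesis using e c d by linarith
  qed
qed

lemma R2pos: fixes s g :: real assumes "0 \<le> s" "s < 31/50" "1 \<le> g" "g \<le> 5/2"
  shows "0 < R2 s g"
proof -
  have e: "R2 s g = 2* s^2*(1-s)^2*(1+s)*((g-1)*(5/2-g)) + R2 s 1 * ((5/2-g)*(2/3)) + R2 s (5/2) * ((g-1)*(2/3))"
    unfolding R2_def by (simp add: field_simps power2_eq_square power3_eq_cube power4_eq_xxxx eval_nat_numeral)
  have a: "0 < R2 s 1" using uni21[OF assms(1,2)] unfolding R2_def by (simp add: algebra_simps)
  have b: "0 < R2 s (5/2)" using uni2g[OF assms(1,2)] unfolding R2_def by (simp add: algebra_simps power2_eq_square)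
  have c: "0 \<le> 2* s^2*(1-s)^2*(1+s)*((g-1)*(5/2-g))" using assms by simp
  have d: "0 \<le> R2 s 1 * ((5/2-g)*(2/3))" "0 \<le> R2 s (5/2) * ((g-1)*(2/3))" using a b assms by simp_all
  show ?thesis
  proof (cases "g = 1")
    case True then show ?thesis using a by simp
  next
    case False
    hence "0 < R2 s (5/2) * ((g-1)*(2/3))" using b assms by simp
    then show ?thesis using e c d by linarith
  qed
qed

definition Pp :: "real \<Rightarrow> real \<Rightarrow> real \<Rightarrow> real \<Rightarrow> real" where
  "Pp mm g z x = -(1+mm*(g-1))*x^3 + (mm*g-1+mm*z*g*(g-2))*x^2 + (1-mm-mm*z*g*(g-1))*x + 2*mm*z"

lemma Pp_split: "D * Pp mm g z x = D*(-(1+mm*(g-1))*x^3 + (mm*g-1)*x^2 + (1-mm)*x)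
   + mm*(z*D)*(g*(g-2)*x^2 - g*(g-1)*x + 2)"
  unfolding Pp_def by (simp add: algebra_simps)

lemma Pp_x0:
  fixes mm g z s :: real
  assumes m: "mm = 1 \<or> mm = 2" and hz: "z*(g-(g-2)* s) = s*(1-s)"
    and s: "0 \<le> s" "s < 31/50" "s^2+s-1 < 0" and g: "1 < g" "g \<le> 5/2"
  shows "Pp mm g z (1-s^2) < 0"
proof -
  define D where "D = g-(g-2)* s"
  have D: "0 < D"
  proof -
    have "D = g*(1-s) + 2* s" unfolding D_def by (simp add: algebra_simps)
    moreover have "0 < g*(1-s)" using s g by simp
    ultimately show ?thesis using s by linarith
  qed
  define E where "E = D*(-(1+mm*(g-1))*(1-s^2)^3 + (mm*g-1)*(1-s^2)^2 + (1-mm)*(1-s^2))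
   + mm*(s*(1-s))*(g*(g-2)*(1-s^2)^2 - g*(g-1)*(1-s^2) + 2)"
  have e: "D * Pp mm g z (1-s^2) = E"
    using Pp_split[of D mm g z "1-s^2"] hz unfolding D_def E_def by simp
  have "E < 0"
  proof (cases "mm = 1")
    case True
    have "E = (s^2+s-1) * R1 s g" unfolding E_def True D_def R1_def
      by (simp add: field_simps power2_eq_square power3_eq_cube power4_eq_xxxx eval_nat_numeral)
    moreover have "0 < R1 s g" using R1pos s g by simp
    ultimately show ?thesis using s(3) by (simp add: mult_neg_pos)
  next
    case False
    hence m2: "mm = 2" using m by simp
    have "E = (s^2+s-1) * R2 s g" unfolding E_def m2 D_def R2_def
      by (simp add: field_simps power2_eq_square power3_eq_cube power4_eq_xxxx eval_nat_numeral)
    moreover have "0 < R2 s g" using R2pos s g by simp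
    ultimately show ?thesis using s(3) by (simp add: mult_neg_pos)
  qed
  hence "D * Pp mm g z (1-s^2) < 0" using e by simp
  thus ?thesis using D by (simp add: mult_less_0_iff)
qed

lemma Pp_mono:
  fixes mm g z x x0 :: real
  assumes m: "mm = 1 \<or> mm = 2" and x: "3/5 \<le> x0" "x0 \<le> x" "x \<le> 1"
    and g: "1 < g" "g \<le> 5/2" and z: "0 \<le> z"
  shows "Pp mm g z x \<le> Pp mm g z x0"
proof -
  define u where "u = x + x0"
  define S2 where "S2 = x^2 + x*x0 + x0^2"
  define k where "k = 1 + mm*(g-1)"
  define br where "br = -k*S2 + (mm*g-1)*u + (1-mm) + mm*z*g*((g-2)*u - (g-1))"
  have diff: "Pp mm g z x - Pp mm g z x0 = (x - x0) * br"
    unfolding Pp_def br_def u_def S2_def k_def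
    by (simp add: algebra_simps power2_eq_square power3_eq_cube)
  have u: "6/5 \<le> u" "u \<le> 2" using x unfolding u_def by auto
  have k: "0 < k" "k \<le> 4" unfolding k_def using m g by auto
  have zp0: "(g-2)*u - (g-1) \<le> 0"
  proof (cases "g \<le> 2")
    case True
    hence "(g-2)*u \<le> 0" using u by (simp add: mult_nonpos_nonneg)
    then show ?thesis using g by linarith
  next
    case False
    hence "(g-2)*u \<le> (g-2)*2" using u by (intro mult_left_mono) auto
    moreover have "(g-2)*2 = 2*g-4" by simp
    ultimately show ?thesis using g by linarith
  qed
  have zp: "mm*z*g*((g-2)*u - (g-1)) \<le> 0"
    using zp0 m z g by (intro mult_nonneg_nonpos) auto
  have S2: "3/4*u^2 \<le> S2"
  proof -
    have "S2 - 3/4*u^2 = (x-x0)^2/4" unfolding S2_def u_def by (simp add: power2_eq_square algebra_simps)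
    moreover have "0 \<le> (x-x0)^2/4" by simp
    ultimately show ?thesis by linarith
  qed
  have kS2: "k*(3/4*u^2) \<le> k*S2" using S2 k by (intro mult_left_mono) auto
  have uq: "u - 3/4*u^2 \<le> 3/25"
  proof -
    have "u - 3/4*u^2 - 3/25 = -(3/4)*((u - 6/5)*(u - 2/15))" by (simp add: power2_eq_square algebra_simps)
    moreover have "0 \<le> (u - 6/5)*(u - 2/15)" using u by simp
    ultimately show ?thesis by linarith
  qed
  have kuq: "k*(u - 3/4*u^2) \<le> k*(3/25)" using uq k by (intro mult_left_mono) auto
  have "br \<le> -k*(3/4*u^2) + (mm*g-1)*u + (1-mm)" unfolding br_def using kS2 zp by linarith
  also have "\<dots> = k*(u - 3/4*u^2) + (mm-2)*u + 1 - mm"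
  proof -
    define q where "q = 3/4*u^2"
    show ?thesis unfolding q_def[symmetric] k_def by (simp add: algebra_simps)
  qed
  also have "\<dots> \<le> k*(3/25) + (mm-2)*u + 1 - mm" using kuq by linarith
  finally have "br \<le> k*(3/25) + (mm-2)*u + 1 - mm" .
  moreover have "k*(3/25) + (mm-2)*u + 1 - mm < 0"
    using m
  proof
    assume "mm = 1" thus ?thesis using k u by simp
  next
    assume "mm = 2" thus ?thesis using k u by simp
  qed
  ultimately have "br < 0" by linarith
  hence "(x - x0) * br \<le> 0" using x by (simp add: mult_nonneg_nonpos)
  thus ?thesis using diff by linarith
qed


lemma deriv_sign:
  fixes m :: nat and g z x c :: real
  assumes c2: "c^2 = 1 - x" and x: "0 < x" "x < 1"
    and P: "Pp (real m) g z x < 0"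
    and gg: "0 < x^2 + (real m+1+real m*g*z)*x - (real m+1) + 2*real m*z"
  shows "2 * c * (Ff m g z (x - 1) c / Gf m g z (x - 1) c) + 1 < 0"
proof -
  let ?gg = "x^2 + (real m+1+real m*g*z)*x - (real m+1) + 2*real m*z"
  have G: "Gf m g z (x - 1) c = (1-x) * ?gg"
    unfolding Gf_def lam_def c2 by (simp add: algebra_simps power2_eq_square)
  have x1: "1 + (x - 1) = x" by simp
  have F: "2 * c * Ff m g z (x - 1) c = 2*(1-x)*((1-x)*(1 + real m*z/x) - a1 m g * x^2 + a2 m g z * x - a3 m g z)"
  proof -
    have "2 * c * Ff m g z (x - 1) c = 2*(c^2)*(c^2 * (1 + real m * z / x) - a1 m g * x^2
                      + a2 m g z * x - a3 m g z)"
      unfolding Ff_def x1 by (simp add: power2_eq_square algebra_simps)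
    thus ?thesis unfolding c2 .
  qed
  have key: "x * (2 * c * Ff m g z (x - 1) c + Gf m g z (x - 1) c) = (1-x) * Pp (real m) g z x"
    unfolding F G Pp_def a1_def a2_def a3_def using x
    by (simp add: field_simps power2_eq_square power3_eq_cube)
  have Gpos: "0 < Gf m g z (x - 1) c" unfolding G using x gg by simp
  have "2 * c * (Ff m g z (x - 1) c / Gf m g z (x - 1) c) + 1
      = (2 * c * Ff m g z (x - 1) c + Gf m g z (x - 1) c) / Gf m g z (x - 1) c"
    using Gpos by (simp add: field_simps)
  also have "\<dots> = ((1-x) * Pp (real m) g z x / x) / Gf m g z (x - 1) c"
  proof -
    have "2 * c * Ff m g z (x - 1) c + Gf m g z (x - 1) c = (1-x) * Pp (real m) g z x / x"
      using key x by (simp add: eq_divide_eq mult.commute)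
    thus ?thesis by simp
  qed
  also have "\<dots> < 0"
  proof -
    have "(1-x) * Pp (real m) g z x < 0" using x P by (simp add: mult_pos_neg)
    hence "(1-x) * Pp (real m) g z x / x < 0" using x by (simp add: divide_neg_pos)
    thus ?thesis using Gpos by (metis divide_neg_pos)
  qed
  finally show ?thesis .
qed


lemma params:
  fixes g z s :: real
  assumes g: "1 < g" "g \<le> 5/2" and z: "z1 g < z" "z \<le> zM g"
    and s_def: "s = C8 g z"
  shows "0 < z" "0 < s" "s^2 + s - 1 < 0" "s < 31/50" "z * (g - (g - 2) * s) = s * (1 - s)"
    and "\<And>mm x. mm = 1 \<or> mm = 2 \<Longrightarrow> 1 - s^2 \<le> x \<Longrightarrow>
            0 < x^2 + (mm+1+mm*g*z)*x - (mm+1) + 2*mm*z"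
proof -
  define r where "r = sqrt 5"
  have r2: "r^2 = 5" unfolding r_def by simp
  have r0: "0 \<le> r" unfolding r_def by simp
  have rlo: "2236/1000 < r" unfolding r_def by (rule real_less_rsqrt) (simp add: power2_eq_square)
  have rhi: "r < 2237/1000"
  proof -
    have "sqrt 5 < sqrt ((2237/1000)^2)" by (subst real_sqrt_less_iff) (simp add: power2_eq_square)
    thus ?thesis unfolding r_def by simp
  qed
  define ph where "ph = (r-1)/2"
  have ph2: "ph^2 = 1 - ph" unfolding ph_def using r2 by (simp add: power2_eq_square field_simps)
  have phb: "1236/1000 < 2*ph" "ph < 6185/10000" unfolding ph_def using rlo rhi by auto
  have z1e: "z1 g = (r-1)/(2*(1+r+g))" unfolding z1_def r_def ..
  have z1pos: "0 < z1 g" unfolding z1e using rlo g by simp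
  show zpos: "0 < z" using z z1pos by linarith
  define a where "a = sqrt g"
  define b where "b = sqrt 2"
  have a2: "a^2 = g" unfolding a_def using g by simp
  have b2: "b^2 = 2" unfolding b_def by simp
  have a1: "1 \<le> a" unfolding a_def using g by simp
  have b1: "1 \<le> b" unfolding b_def by simp
  have zMe: "zM g = 1/(a+b)^2" unfolding zM_def a_def b_def ..
  have ab4: "4 \<le> (a+b)^2"
  proof -
    have "(2::real)^2 \<le> (a+b)^2" using a1 b1 by (intro power_mono) auto
    thus ?thesis by simp
  qed
  have zab: "z*(a+b)^2 \<le> 1"
  proof -
    have "0 < (a+b)^2" using ab4 by linarith
    thus ?thesis using z(2) unfolding zMe by (simp add: le_divide_eq)
  qed
  have zq: "z \<le> 1/4"
  proof -
    have "z*4 \<le> z*(a+b)^2" using ab4 zpos by (intro mult_left_mono) auto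
    thus ?thesis using zab by linarith
  qed
  have amb: "(a-b)^2 \<le> (a+b)^2"
  proof -
    have "(a+b)^2 - (a-b)^2 = 4*a*b" by (simp add: power2_eq_square algebra_simps)
    moreover have "0 \<le> 4*a*b" using a1 b1 by simp
    ultimately show ?thesis by linarith
  qed
  define rad where "rad = 1 - 2 * (g + 2) * z + (g - 2)^2 * z^2"
  have rade: "rad = (1 - z*(a+b)^2) * (1 - z*(a-b)^2)"
  proof -
    have "(a+b)^2 * (a-b)^2 = (a^2-b^2)^2" by (simp add: power2_eq_square algebra_simps)
    hence e1: "(a+b)^2 * (a-b)^2 = (g-2)^2" using a2 b2 by simp
    have e2: "(a+b)^2 + (a-b)^2 = 2*g + 4" using a2 b2 by (simp add: power2_eq_square algebra_simps)
    have "(1 - z*(a+b)^2) * (1 - z*(a-b)^2) = 1 - z*((a+b)^2 + (a-b)^2) + z^2*((a+b)^2 * (a-b)^2)"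
      by (simp add: power2_eq_square algebra_simps)
    also have "\<dots> = rad" unfolding e1 e2 rad_def by (simp add: algebra_simps)
    finally show ?thesis by simp
  qed
  have rad0: "0 \<le> rad"
  proof -
    have "z*(a-b)^2 \<le> z*(a+b)^2" using amb zpos by (intro mult_left_mono) auto
    thus ?thesis unfolding rade using zab by (intro mult_nonneg_nonneg) auto
  qed
  define w where "w = wf g z"
  have w0: "0 \<le> w" and w2: "w^2 = rad" unfolding w_def wf_def rad_def[symmetric] using rad0 by auto
  define p where "p = 1 + (g-2)*z"
  have se: "s = (p + w)/2" unfolding s_def C8_def V8_def p_def w_def by (simp add: field_simps)
  have rel: "s^2 - p* s + g*z = 0"
  proof -
    have "s^2 - p* s = (w^2 - p^2)/4" unfolding se by (simp add: power2_eq_square field_simps)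
    also have "\<dots> = -g*z" unfolding w2 rad_def p_def by (simp add: power2_eq_square field_simps)
    finally show ?thesis by simp
  qed
  show "z * (g - (g - 2) * s) = s * (1 - s)" using rel unfolding p_def by (simp add: power2_eq_square algebra_simps)
  have pb: "3/4 \<le> p" "p \<le> 9/8"
  proof -
    have "(-1)*z \<le> (g-2)*z" using g zpos by (intro mult_right_mono) auto
    hence "-z \<le> (g-2)*z" by simp
    moreover have "(g-2)*z \<le> (1/2)*(1/4)" using g zpos zq by (intro mult_mono) auto
    ultimately show "3/4 \<le> p" "p \<le> 9/8" unfolding p_def using zq by auto
  qed
  show spos: "0 < s" unfolding se using pb w0 by simp
  have Dph: "0 < g - (g-2)*ph"
  proof -
    have "g - (g-2)*ph = g*(1-ph) + 2*ph" by (simp add: algebra_simps)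
    moreover have "0 < g*(1-ph)" using g phb by simp
    ultimately show ?thesis using phb by linarith
  qed
  have z1id: "z1 g * (g - (g-2)*ph) = 2*ph - 1"
  proof -
    have "(r-1)*(2*g - (g-2)*(r-1)) = 4*(r-2)*(1+r+g)"
      using r2 by (simp add: power2_eq_square algebra_simps)
    moreover have nz: "1+r+g \<noteq> 0" using rlo g by linarith
    ultimately show ?thesis unfolding z1e ph_def by (simp add: field_simps)
  qed
  have qph: "0 < ph^2 - p*ph + g*z"
  proof -
    have "ph^2 - p*ph + g*z = 1 - 2*ph + z*(g - (g-2)*ph)" unfolding ph2 p_def by (simp add: algebra_simps)
    moreover have "z1 g * (g - (g-2)*ph) < z*(g - (g-2)*ph)" using z Dph by simp
    ultimately show ?thesis using z1id by linarith
  qed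
  have sph: "s < ph"
  proof (rule ccontr)
    assume "\<not> s < ph"
    hence "0 \<le> s - ph" by simp
    moreover have "0 \<le> s + ph - p" using \<open>0 \<le> s - ph\<close> spos phb pb by linarith
    ultimately have "0 \<le> (s - ph)*(s + ph - p)" by simp
    moreover have "(s - ph)*(s + ph - p) = (s^2 - p* s + g*z) - (ph^2 - p*ph + g*z)"
      by (simp add: power2_eq_square algebra_simps)
    ultimately show False using rel qph by linarith
  qed
  show "s^2 + s - 1 < 0"
  proof -
    have "s^2 + s - 1 = (s - ph)*(s + ph + 1)" using ph2 by (simp add: power2_eq_square algebra_simps)
    moreover have "(s - ph)*(s + ph + 1) < 0" using sph spos phb by (intro mult_neg_pos) auto
    ultimately show ?thesis by simp
  qed
  show "s < 31/50" using sph phb by linarith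
  fix mm x :: real
  assume m: "mm = 1 \<or> mm = 2" and x: "1 - s^2 \<le> x"
  have "s^2 < ph^2" using spos sph by (simp add: power_strict_mono)
  hence xph: "ph < x" using x ph2 by linarith
  let ?gg = "\<lambda>x. x^2 + (mm+1+mm*g*z)*x - (mm+1) + 2*mm*z"
  have "?gg x - ?gg ph = (x - ph)*(x + ph + (mm+1+mm*g*z))" by (simp add: power2_eq_square algebra_simps)
  moreover have "0 \<le> (x - ph)*(x + ph + (mm+1+mm*g*z))" using xph phb m g zpos by (intro mult_nonneg_nonneg) auto
  moreover have "?gg ph = mm*(ph - 1 + z*(g*ph+2))" unfolding ph2 by (simp add: algebra_simps)
  moreover have "z1 g * (g*ph+2) = 1 - ph"
  proof -
    have "(r-1)*(g*(r-1)+4) = 2*(3-r)*(1+r+g)"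
      using r2 by (simp add: power2_eq_square algebra_simps)
    moreover have nz: "1+r+g \<noteq> 0" using rlo g by linarith
    ultimately show ?thesis unfolding z1e ph_def by (simp add: field_simps)
  qed
  moreover have "0 < g*ph" using g phb by simp
  hence "z1 g * (g*ph+2) < z*(g*ph+2)" using z by (intro mult_strict_right_mono) auto
  ultimately show "0 < ?gg x" using m by auto
qed


theorem mainTheorem18:
  fixes m :: nat and \<gamma> z :: real and C :: "real \<Rightarrow> real"
  assumes "m = 1 \<or> m = 2"
    and "gamma_star < \<gamma>" and "\<gamma> \<le> gamma1"
    and "z1 \<gamma> < z" and "z \<le> zM \<gamma>"
    and "continued_solution m \<gamma> z C"
  shows "(\<forall>V\<in>{V8 \<gamma> z<..<0}. C V < sqrt (- V)) \<and> (C \<longlongrightarrow> 0) (at_left 0)"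
proof -
  have g1: "1 < \<gamma>" using gamma_star_gt1 assms(2) by linarith
  have g52: "\<gamma> \<le> 5/2"
  proof -
    have "sqrt 2 < sqrt ((3/2)^2)" by (subst real_sqrt_less_iff) (simp add: power2_eq_square)
    hence "sqrt 2 < 3/2" by simp
    thus ?thesis using assms(3) unfolding gamma1_def by linarith
  qed
  have mm: "real m = 1 \<or> real m = 2" using assms(1) by auto
  define a where "a = V8 \<gamma> z"
  define s where "s = C8 \<gamma> z"
  note P = params[OF g1 g52 assms(4,5) s_def]
  have zpos: "0 < z" and spos: "0 < s" and s2: "s^2 + s - 1 < 0" and s31: "s < 31/50"
    and hz: "z * (\<gamma> - (\<gamma> - 2) * s) = s * (1 - s)" using P by auto
  have sa: "s = 1 + a" unfolding s_def a_def C8_def ..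
  have a0: "a < 0" using sa s31 by linarith
  have as: "a < 0" "-1 < a" using sa spos s31 by auto
  from assms(6) obtain c where
      Ca: "C a = s" and
      dca: "(C has_real_derivative c) (at a within {a..<0})" and
      pos: "\<forall>V\<in>{a..<0}. 0 < C V" and
      dec: "\<forall>x y. a \<le> x \<longrightarrow> x \<le> y \<longrightarrow> y < 0 \<longrightarrow> C y \<le> C x" and
      der: "\<forall>V\<in>{a<..<0}. Gf m \<gamma> z V (C V) \<noteq> 0 \<and>
          (C has_real_derivative Ff m \<gamma> z V (C V) / Gf m \<gamma> z V (C V)) (at V)"
    unfolding continued_solution_def a_def[symmetric] s_def[symmetric] by blast
  have cont: "continuous_on {a..<0} C"
  proof (rule DERIV_continuous_on)
    fix x assume x: "x \<in> {a..<0}"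
    show "(C has_field_derivative (if x = a then c else Ff m \<gamma> z x (C x) / Gf m \<gamma> z x (C x)))
          (at x within {a..<0})"
    proof (cases "x = a")
      case True then show ?thesis using dca by simp
    next
      case False
      hence "x \<in> {a<..<0}" using x by auto
      then show ?thesis using der False by (auto intro: has_field_derivative_at_within)
    qed
  qed
  define h where "h V = (C V)^2 + V" for V
  have hcont: "continuous_on {a..<0} h" unfolding h_def by (intro continuous_intros cont)
  have ha: "h a < 0" unfolding h_def Ca using s2 sa by simp
  have main: "\<forall>V\<in>{a<..<0}. h V < 0"
  proof (rule ccontr)
    assume "\<not> (\<forall>V\<in>{a<..<0}. h V < 0)"
    then obtain V1 where V1: "a < V1" "V1 < 0" "0 \<le> h V1" by auto
    have hc1: "continuous_on {a..V1} h" by (rule continuous_on_subset[OF hcont]) (use V1 in auto)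
    define T where "T = {a..V1} \<inter> h -` {0..}"
    have clT: "closed T" unfolding T_def by (rule continuous_closed_preimage[OF hc1]) auto
    have "compact ({a..V1} \<inter> T)" by (rule compact_Int_closed[OF compact_Icc clT])
    hence cT: "compact T" unfolding T_def by (simp add: Int_absorb1)
    have V1T: "V1 \<in> T" unfolding T_def using V1 by auto
    obtain V0 where V0T: "V0 \<in> T" and V0min: "\<forall>t\<in>T. V0 \<le> t"
      using compact_attains_inf[OF cT] V1T by auto
    have V0: "a \<le> V0" "V0 \<le> V1" "0 \<le> h V0" using V0T unfolding T_def by auto
    have aV0: "a < V0" using V0 ha by (cases "V0 = a") auto
    have hV0: "h V0 = 0"
    proof -
      have "continuous_on {a..V0} h" by (rule continuous_on_subset[OF hcont]) (use V0 V1 in auto)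
      then obtain x where x: "a \<le> x" "x \<le> V0" "h x = 0"
        using IVT'[of h a 0 V0] ha V0 by auto
      hence "x \<in> T" unfolding T_def using V0 by auto
      hence "V0 \<le> x" using V0min by auto
      thus ?thesis using x by auto
    qed
    have below: "h V < 0" if "a \<le> V" "V < V0" for V
    proof (rule ccontr)
      assume "\<not> h V < 0"
      hence "V \<in> T" unfolding T_def using that V0 by auto
      thus False using V0min that by auto
    qed
    have V0in: "V0 \<in> {a<..<0}" using aV0 V0 V1 by auto
    define c0 where "c0 = C V0"
    define d where "d = Ff m \<gamma> z V0 c0 / Gf m \<gamma> z V0 c0"
    have dC: "(C has_real_derivative d) (at V0)" using der V0in unfolding d_def c0_def by auto
    have c0pos: "0 < c0" unfolding c0_def using pos V0in by auto
    have c0s: "c0 \<le> s" unfolding c0_def Ca[symmetric] using dec aV0 V0in by auto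
    have c02: "c0^2 = - V0" using hV0 unfolding h_def c0_def by simp
    define x where "x = 1 + V0"
    have xV: "V0 = x - 1" unfolding x_def by simp
    have c2x: "c0^2 = 1 - x" using c02 unfolding x_def by simp
    have x01: "0 < x" "x < 1" using V0in as unfolding x_def by auto
    have x0x: "1 - s^2 \<le> x"
    proof -
      have "c0^2 \<le> s^2" using c0pos c0s by (intro power_mono) auto
      thus ?thesis using c2x by linarith
    qed
    have x35: "3/5 \<le> 1 - s^2"
    proof -
      have "s^2 \<le> (31/50)^2" using spos s31 by (intro power_mono) auto
      thus ?thesis by (simp add: power2_eq_square)
    qed
    have Pneg: "Pp (real m) \<gamma> z x < 0"
    proof -
      have "Pp (real m) \<gamma> z x \<le> Pp (real m) \<gamma> z (1 - s^2)"
        using Pp_mono[OF mm x35 x0x] x01 g1 g52 zpos by auto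
      also have "\<dots> < 0" using Pp_x0[OF mm hz] spos s31 s2 g1 g52 by auto
      finally show ?thesis .
    qed
    have ggpos: "0 < x^2 + (real m+1+real m*\<gamma>*z)*x - (real m+1) + 2*real m*z"
      using P(6)[OF mm x0x] .
    have hd: "(h has_real_derivative (2 * c0 * d + 1)) (at V0)"
    proof -
      have "((\<lambda>V. C V * C V + V) has_real_derivative (d * C V0 + C V0 * d + 1)) (at V0)"
        using DERIV_add[OF DERIV_mult[OF dC dC] DERIV_ident] by simp
      moreover have "(\<lambda>V. C V * C V + V) = h" unfolding h_def by (simp add: power2_eq_square)
      moreover have "d * C V0 + C V0 * d + 1 = 2 * c0 * d + 1" unfolding c0_def by simp
      ultimately show ?thesis by metis
    qed
    have hdneg: "2 * c0 * d + 1 < 0"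
      unfolding d_def xV using deriv_sign[OF c2x x01 Pneg ggpos] .
    obtain e where e: "e > 0" "\<forall>t>0. t < e \<longrightarrow> h V0 < h (V0 - t)"
      using DERIV_neg_dec_left[OF hd hdneg] by auto
    define t where "t = min e (V0 - a) / 2"
    have t: "0 < t" "t < e" "t < V0 - a" unfolding t_def using e aV0 by auto
    have "h V0 < h (V0 - t)" using e t by auto
    moreover have "h (V0 - t) < 0" using below[of "V0 - t"] t by auto
    ultimately show False using hV0 by linarith
  qed
  have part1: "\<forall>V\<in>{a<..<0}. C V < sqrt (- V)"
  proof
    fix V assume V: "V \<in> {a<..<0}"
    hence "h V < 0" using main by blast
    hence "(C V)^2 < -V" unfolding h_def by linarith
    thus "C V < sqrt (- V)" by (rule real_less_rsqrt)
  qed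
  have lim: "(C \<longlongrightarrow> 0) (at_left 0)"
  proof (rule tendsto_sandwich[where f = "\<lambda>_. 0" and h = "\<lambda>V. sqrt (- V)"])
    have ev: "eventually (\<lambda>V. V \<in> {a<..<0}) (at_left (0::real))"
      using eventually_at_left_real[OF a0] .
    show "eventually (\<lambda>V. 0 \<le> C V) (at_left 0)"
    proof (rule eventually_mono[OF ev])
      fix V assume "V \<in> {a<..<0}"
      hence "V \<in> {a..<0}" by auto
      thus "0 \<le> C V" using pos less_imp_le by blast
    qed
    show "eventually (\<lambda>V. C V \<le> sqrt (- V)) (at_left 0)"
    proof (rule eventually_mono[OF ev])
      fix V assume "V \<in> {a<..<0}"
      thus "C V \<le> sqrt (- V)" using part1 less_imp_le by blast
    qed
    show "((\<lambda>_. 0) \<longlongrightarrow> (0::real)) (at_left 0)" by simp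
    have "((\<lambda>V. sqrt (- V)) \<longlongrightarrow> sqrt (- 0)) (at_left (0::real))"
      by (intro tendsto_intros)
    thus "((\<lambda>V. sqrt (- V)) \<longlongrightarrow> 0) (at_left (0::real))" by simp
  qed
  show ?thesis using part1 lim unfolding a_def by auto
qed

end
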